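(* The restrictions to $L^{(d-1)}$ of the polynomials $\langle v,v\rangle$ and $\langle M^kv,M^kv\rangle$, $1\le k<d$, generate the field $\mathbb C(L^{(d-1)})^{W_d(\mathbb C)}$ of $W_d(\mathbb C)$-invariant rational functions on $L^{(d-1)}$.
   Context: Fix $d\ge2$. $V=\mathbb C^d\oplus\mathfrak{so}(d,\mathbb C)$ has elements $(v,M)$, $v=(c_1,\dots,c_d)^\top$, $M$ complex skew-symmetric with $M_{ij}=c_{ij}=-M_{ji}$ for $i<j$, on which $O_d(\mathbb C)=\{A:AA^\top=I\}$ acts by $(Av,AMA^\top)$. $\langle a,b\rangle=\sum_ia_ib_i$ (bilinear, no conjugation). $L^{(d-1)}\subset V$ is the linear subspace of pairs with $v=(0,\dots,0,c_d)^\top$ and $M$ having only the entries $c_{12},c_{23},\dots,c_{(d-1)d}$ (and their negatives) possibly nonzero. $W_d(\mathbb C)$ is the group of diagonal matrices with diagonal entries in $\{-1,1\}$, acting on $L^{(d-1)}$ by restriction of the action. Generation is as a field over $\mathbb C$. *)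

theory Defs
  imports Complex_Main
begin

text \<open>Vectors in C^d are functions nat => complex, d x d matrices are
functions nat => nat => complex; only indices < d are meaningful (0-based indexing,
so paper index i corresponds to i-1 here).\<close>

definition bil :: "nat \<Rightarrow> (nat \<Rightarrow> complex) \<Rightarrow> (nat \<Rightarrow> complex) \<Rightarrow> complex" where
  "bil d a b = (\<Sum>i<d. a i * b i)"

definition mat_vec :: "nat \<Rightarrow> (nat \<Rightarrow> nat \<Rightarrow> complex) \<Rightarrow> (nat \<Rightarrow> complex) \<Rightarrow> (nat \<Rightarrow> complex)" where
  "mat_vec d A v = (\<lambda>i. \<Sum>j<d. A i j * v j)"

definition mat_mul :: "nat \<Rightarrow> (nat \<Rightarrow> nat \<Rightarrow> complex) \<Rightarrow> (nat \<Rightarrow> nat \<Rightarrow> complex) \<Rightarrow> (nat \<Rightarrow> nat \<Rightarrow> complex)" where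
  "mat_mul d A B = (\<lambda>i k. \<Sum>j<d. A i j * B j k)"

definition transp :: "(nat \<Rightarrow> nat \<Rightarrow> complex) \<Rightarrow> (nat \<Rightarrow> nat \<Rightarrow> complex)" where
  "transp A = (\<lambda>i j. A j i)"

definition id_mat :: "nat \<Rightarrow> (nat \<Rightarrow> nat \<Rightarrow> complex)" where
  "id_mat d = (\<lambda>i j. if i = j \<and> i < d then 1 else 0)"

fun mat_pow :: "nat \<Rightarrow> (nat \<Rightarrow> nat \<Rightarrow> complex) \<Rightarrow> nat \<Rightarrow> (nat \<Rightarrow> nat \<Rightarrow> complex)" where
  "mat_pow d M 0 = id_mat d"
| "mat_pow d M (Suc k) = mat_mul d M (mat_pow d M k)"

text \<open>Coordinates on L^(d-1): x 0 = c_d, and x i = c_{i,i+1} for 1 \<le> i \<le> d-1.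
  L_vec / L_mat give the corresponding element (v, M) of V.\<close>

definition L_vec :: "nat \<Rightarrow> (nat \<Rightarrow> complex) \<Rightarrow> (nat \<Rightarrow> complex)" where
  "L_vec d x = (\<lambda>i. if i = d - 1 then x 0 else 0)"

definition L_mat :: "nat \<Rightarrow> (nat \<Rightarrow> complex) \<Rightarrow> (nat \<Rightarrow> nat \<Rightarrow> complex)" where
  "L_mat d x = (\<lambda>i j. if j = i + 1 \<and> j < d then x j
                      else if i = j + 1 \<and> i < d then - x i else 0)"

definition L_coord :: "nat \<Rightarrow> (nat \<Rightarrow> complex) \<Rightarrow> (nat \<Rightarrow> nat \<Rightarrow> complex) \<Rightarrow> (nat \<Rightarrow> complex)" where
  "L_coord d v M = (\<lambda>i. if i = 0 then v (d - 1) else if i < d then M (i - 1) i else 0)"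

definition Wd :: "nat \<Rightarrow> (nat \<Rightarrow> nat \<Rightarrow> complex) set" where
  "Wd d = {A. (\<forall>i j. (i \<noteq> j \<or> d \<le> i) \<longrightarrow> A i j = 0) \<and> (\<forall>i<d. A i i = 1 \<or> A i i = -1)}"

definition W_act_L :: "nat \<Rightarrow> (nat \<Rightarrow> nat \<Rightarrow> complex) \<Rightarrow> (nat \<Rightarrow> complex) \<Rightarrow> (nat \<Rightarrow> complex)" where
  "W_act_L d A x = L_coord d (mat_vec d A (L_vec d x))
                             (mat_mul d (mat_mul d A (L_mat d x)) (transp A))"

text \<open>Polynomial functions in the variables x 0, ..., x (d-1) (over C, which is infinite,
  these correspond exactly to polynomials).\<close>
inductive_set poly_fun :: "nat \<Rightarrow> ((nat \<Rightarrow> complex) \<Rightarrow> complex) set" for d where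
  pf_const: "(\<lambda>x. c) \<in> poly_fun d"
| pf_var: "i < d \<Longrightarrow> (\<lambda>x. x i) \<in> poly_fun d"
| pf_add: "p \<in> poly_fun d \<Longrightarrow> q \<in> poly_fun d \<Longrightarrow> (\<lambda>x. p x + q x) \<in> poly_fun d"
| pf_mult: "p \<in> poly_fun d \<Longrightarrow> q \<in> poly_fun d \<Longrightarrow> (\<lambda>x. p x * q x) \<in> poly_fun d"

definition rat_funs :: "nat \<Rightarrow> (((nat \<Rightarrow> complex) \<Rightarrow> complex) \<times> ((nat \<Rightarrow> complex) \<Rightarrow> complex)) set" where
  "rat_funs d = {(p, q). p \<in> poly_fun d \<and> q \<in> poly_fun d \<and> (\<exists>x. q x \<noteq> 0)}"

definition same_ratfun :: "(((nat \<Rightarrow> complex) \<Rightarrow> complex) \<times> ((nat \<Rightarrow> complex) \<Rightarrow> complex))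
     \<Rightarrow> (((nat \<Rightarrow> complex) \<Rightarrow> complex) \<times> ((nat \<Rightarrow> complex) \<Rightarrow> complex)) \<Rightarrow> bool" where
  "same_ratfun r s = (\<forall>x. fst r x * snd s x = fst s x * snd r x)"

definition W_invariant :: "nat \<Rightarrow> (((nat \<Rightarrow> complex) \<Rightarrow> complex) \<times> ((nat \<Rightarrow> complex) \<Rightarrow> complex)) \<Rightarrow> bool" where
  "W_invariant d r = (\<forall>A\<in>Wd d. same_ratfun (fst r \<circ> W_act_L d A, snd r \<circ> W_act_L d A) r)"

definition gens :: "nat \<Rightarrow> (nat \<Rightarrow> complex) \<Rightarrow> (nat \<Rightarrow> complex)" where
  "gens d x = (\<lambda>k. if k = 0 then bil d (L_vec d x) (L_vec d x)
                   else if k < d then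
                     bil d (mat_vec d (mat_pow d (L_mat d x) k) (L_vec d x))
                           (mat_vec d (mat_pow d (L_mat d x) k) (L_vec d x))
                   else 0)"

definition gen_field :: "nat \<Rightarrow> (((nat \<Rightarrow> complex) \<Rightarrow> complex) \<times> ((nat \<Rightarrow> complex) \<Rightarrow> complex)) set" where
  "gen_field d = {(P \<circ> gens d, Q \<circ> gens d) | P Q.
       P \<in> poly_fun d \<and> Q \<in> poly_fun d \<and> (\<exists>x. Q (gens d x) \<noteq> 0)}"

end

theory Submission
  imports Defs "HOL-Computational_Algebra.Polynomial"
begin


lemma pf_neg: "p \<in> poly_fun d \<Longrightarrow> (\<lambda>x. - p x) \<in> poly_fun d"
proof -
  assume "p \<in> poly_fun d"
  hence "(\<lambda>x. (\<lambda>x. -1) x * p x) \<in> poly_fun d" by (intro pf_mult pf_const)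
  thus ?thesis by simp
qed

lemma pf_diff: "p \<in> poly_fun d \<Longrightarrow> q \<in> poly_fun d \<Longrightarrow> (\<lambda>x. p x - q x) \<in> poly_fun d"
  using pf_add[OF _ pf_neg, of p d q] by simp

lemma pf_sum: "finite A \<Longrightarrow> (\<And>a. a \<in> A \<Longrightarrow> f a \<in> poly_fun d) \<Longrightarrow> (\<lambda>x. \<Sum>a\<in>A. f a x) \<in> poly_fun d"
proof (induction A rule: finite_induct)
  case empty then show ?case using pf_const[of 0] by simp
next
  case (insert a A) then show ?case by (simp add: pf_add)
qed

lemma pf_prod: "finite A \<Longrightarrow> (\<And>a. a \<in> A \<Longrightarrow> f a \<in> poly_fun d) \<Longrightarrow> (\<lambda>x. \<Prod>a\<in>A. f a x) \<in> poly_fun d"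
proof (induction A rule: finite_induct)
  case empty then show ?case using pf_const[of 1] by simp
next
  case (insert a A) then show ?case by (simp add: pf_mult)
qed

lemma pf_pow: "p \<in> poly_fun d \<Longrightarrow> (\<lambda>x. p x ^ n) \<in> poly_fun d"
  by (induction n) (auto intro: pf_mult pf_const)

lemma pf_dep: "f \<in> poly_fun d \<Longrightarrow> (\<forall>i<d. x i = x' i) \<Longrightarrow> f x = f x'"
  by (induction f rule: poly_fun.induct) auto

lemma pf_univ: "f \<in> poly_fun d \<Longrightarrow> \<exists>p. \<forall>t. f (x(i:=t)) = poly p t"
proof (induction f rule: poly_fun.induct)
  case (pf_const c) then show ?case by (intro exI[of _ "[:c:]"]) simp
next
  case (pf_var j) then show ?case
    by (cases "j = i") (auto intro: exI[of _ "[:0,1:]"] exI[of _ "[:x j:]"])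
next
  case (pf_add p q) then obtain a b where "\<forall>t. p (x(i:=t)) = poly a t" "\<forall>t. q (x(i:=t)) = poly b t" by blast
  then have "\<forall>t. (\<lambda>x. p x + q x) (x(i:=t)) = poly (a+b) t" unfolding poly_add by metis
  then show ?case by blast
next
  case (pf_mult p q) then obtain a b where "\<forall>t. p (x(i:=t)) = poly a t" "\<forall>t. q (x(i:=t)) = poly b t" by blast
  then have "\<forall>t. (\<lambda>x. p x * q x) (x(i:=t)) = poly (a*b) t" unfolding poly_mult by metis
  then show ?case by blast
qed

lemma pf_nonzero_mult:
  assumes f: "f \<in> poly_fun d" and h: "h \<in> poly_fun d" and fa: "f a \<noteq> 0" and hb: "h b \<noteq> 0"
  shows "\<exists>x. f x * h x \<noteq> 0"
proof -
  have "\<exists>a b. f a \<noteq> 0 \<and> h b \<noteq> 0 \<and> (\<forall>i<k. a i = b i)" for k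
  proof (induction k)
    case 0 then show ?case using fa hb by blast
  next
    case (Suc k)
    then obtain a b where ab: "f a \<noteq> 0" "h b \<noteq> 0" "\<forall>i<k. a i = b i" by blast
    obtain pa where pa: "\<forall>t. f (a(k:=t)) = poly pa t" using pf_univ[OF f] by blast
    obtain pb where pb: "\<forall>t. h (b(k:=t)) = poly pb t" using pf_univ[OF h] by blast
    have "pa \<noteq> 0" using pa[rule_format, of "a k"] ab(1) by auto
    moreover have "pb \<noteq> 0" using pb[rule_format, of "b k"] ab(2) by auto
    ultimately have fin: "finite ({t. poly pa t = 0} \<union> {t. poly pb t = 0})"
      by (simp add: poly_roots_finite)
    obtain t where t: "t \<notin> {t. poly pa t = 0} \<union> {t. poly pb t = 0}"
      using ex_new_if_finite[OF infinite_UNIV_char_0 fin] by blast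
    have "f (a(k:=t)) \<noteq> 0" using pa t by auto
    moreover have "h (b(k:=t)) \<noteq> 0" using pb t by auto
    moreover have "\<forall>i<Suc k. (a(k:=t)) i = (b(k:=t)) i" using ab(3) by (auto simp: less_Suc_eq)
    ultimately show ?case by blast
  qed
  then obtain a' b' where ab: "f a' \<noteq> 0" "h b' \<noteq> 0" "\<forall>i<d. a' i = b' i" by blast
  have "h a' = h b'" using pf_dep[OF h ab(3)] .
  then show ?thesis using ab by (intro exI[of _ a']) simp
qed



definition u :: "nat \<Rightarrow> nat \<Rightarrow> (nat \<Rightarrow> complex) \<Rightarrow> nat \<Rightarrow> complex" where
  "u d k x = mat_vec d (mat_pow d (L_mat d x) k) (L_vec d x)"

lemma pf_Lmat: "(\<lambda>x. L_mat d x i j) \<in> poly_fun d"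
proof -
  consider "j = i + 1 \<and> j < d" | "\<not>(j = i + 1 \<and> j < d)" "i = j + 1 \<and> i < d"
    | "\<not>(j = i + 1 \<and> j < d)" "\<not>(i = j + 1 \<and> i < d)" by blast
  then show ?thesis
  proof cases
    case 1 then show ?thesis unfolding L_mat_def by (simp add: pf_var)
  next
    case 2 then show ?thesis unfolding L_mat_def by (simp add: pf_var pf_neg)
  next
    case 3 then have "(\<lambda>x. L_mat d x i j) = (\<lambda>x. 0)" unfolding L_mat_def by auto
    then show ?thesis using pf_const[of 0] by simp
  qed
qed

lemma pf_Lvec: "0 < d \<Longrightarrow> (\<lambda>x. L_vec d x i) \<in> poly_fun d"
  unfolding L_vec_def by (cases "i = d - 1") (auto intro: pf_var pf_const)

lemma pf_matpow: "(\<lambda>x. mat_pow d (L_mat d x) k i j) \<in> poly_fun d"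
proof (induction k arbitrary: i j)
  case 0 then show ?case unfolding id_mat_def by (simp add: pf_const)
next
  case (Suc k) then show ?case unfolding mat_pow.simps mat_mul_def
    by (intro pf_sum) (auto intro: pf_mult pf_Lmat)
qed

lemma pf_u: assumes d: "0 < d" shows "(\<lambda>x. u d k x i) \<in> poly_fun d"
  unfolding u_def mat_vec_def by (intro pf_sum) (auto intro!: pf_mult pf_matpow pf_Lvec[OF d])

lemma pf_gens: "0 < d \<Longrightarrow> (\<lambda>x. gens d x k) \<in> poly_fun d"
proof -
  assume d: "0 < d"
  have "(\<lambda>x. bil d (L_vec d x) (L_vec d x)) \<in> poly_fun d"
    unfolding bil_def by (intro pf_sum) (auto intro!: pf_mult pf_Lvec[OF d])
  moreover have "(\<lambda>x. bil d (u d k x) (u d k x)) \<in> poly_fun d"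
    unfolding bil_def by (intro pf_sum) (auto intro!: pf_mult pf_u[OF d])
  ultimately show ?thesis unfolding gens_def u_def using pf_const[of 0 d] by (cases "k = 0"; cases "k < d") simp_all
qed

lemma pf_comp: "P \<in> poly_fun d \<Longrightarrow> (\<And>k. k < d \<Longrightarrow> (\<lambda>x. G x k) \<in> poly_fun d) \<Longrightarrow> (\<lambda>x. P (G x)) \<in> poly_fun d"
  by (induction P rule: poly_fun.induct) (auto intro: pf_const pf_add pf_mult)

lemma pf_comp_gens: "0 < d \<Longrightarrow> P \<in> poly_fun d \<Longrightarrow> (\<lambda>x. P (gens d x)) \<in> poly_fun d"
  using pf_comp pf_gens by blast

lemma gens_sign:
  assumes e: "\<forall>i<d. e i * e i = 1" and x0: "x' 0 = e (d-1) * x 0"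
    and xj: "\<forall>j. 0 < j \<longrightarrow> j < d \<longrightarrow> x' j = e (j-1) * e j * x j"
  shows "gens d x' = gens d x"
proof -
  have Lv: "L_vec d x' i = e i * L_vec d x i" for i unfolding L_vec_def using x0 by simp
  have Lm: "L_mat d x' i j = e i * e j * L_mat d x i j" for i j
  proof -
    consider "j = i + 1 \<and> j < d" | "\<not>(j = i + 1 \<and> j < d)" "i = j + 1 \<and> i < d"
      | "\<not>(j = i + 1 \<and> j < d)" "\<not>(i = j + 1 \<and> i < d)" by blast
    then show ?thesis
    proof cases
      case 1 then show ?thesis unfolding L_mat_def using xj by simp
    next
      case 2 then show ?thesis unfolding L_mat_def using xj by (simp add: mult.commute)
    next
      case 3 then have "L_mat d x' i j = 0" "L_mat d x i j = 0" unfolding L_mat_def by auto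
      then show ?thesis by simp
    qed
  qed
  have Mp: "mat_pow d (L_mat d x') k i j = e i * e j * mat_pow d (L_mat d x) k i j" for k i j
  proof (induction k arbitrary: i j)
    case 0 then show ?case unfolding id_mat_def mat_pow.simps using e by auto
  next
    case (Suc k)
    have "mat_pow d (L_mat d x') (Suc k) i j = (\<Sum>l<d. L_mat d x' i l * mat_pow d (L_mat d x') k l j)"
      by (simp add: mat_mul_def)
    also have "\<dots> = (\<Sum>l<d. e i * e j * (L_mat d x i l * mat_pow d (L_mat d x) k l j))"
    proof (rule sum.cong)
      fix l assume "l \<in> {..<d}"
      then have "e l * e l = 1" using e by auto
      then show "L_mat d x' i l * mat_pow d (L_mat d x') k l j = e i * e j * (L_mat d x i l * mat_pow d (L_mat d x) k l j)"
        unfolding Lm Suc by (simp add: algebra_simps)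
    qed simp
    also have "\<dots> = e i * e j * mat_pow d (L_mat d x) (Suc k) i j"
      by (simp add: mat_mul_def sum_distrib_left)
    finally show ?case .
  qed
  have Mv: "u d k x' i = e i * u d k x i" for k i
  proof -
    have "u d k x' i = (\<Sum>j<d. e i * (mat_pow d (L_mat d x) k i j * L_vec d x j))"
      unfolding u_def mat_vec_def
    proof (rule sum.cong)
      fix j assume "j \<in> {..<d}"
      then have "e j * e j = 1" using e by auto
      then show "mat_pow d (L_mat d x') k i j * L_vec d x' j = e i * (mat_pow d (L_mat d x) k i j * L_vec d x j)"
        unfolding Mp Lv by (metis mult.assoc mult.left_commute mult_1_right)
    qed simp
    then show ?thesis unfolding u_def mat_vec_def by (simp add: sum_distrib_left)
  qed
  have B: "bil d (\<lambda>i. e i * w i) (\<lambda>i. e i * w i) = bil d w w" for w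
    unfolding bil_def
  proof (rule sum.cong)
    fix i assume "i \<in> {..<d}"
    then have "e i * e i = 1" using e by auto
    then show "e i * w i * (e i * w i) = w i * w i" by (metis mult.assoc mult.left_commute mult_1_right)
  qed simp
  have V: "L_vec d x' = (\<lambda>i. e i * L_vec d x i)" using Lv by auto
  have U: "u d k x' = (\<lambda>i. e i * u d k x i)" for k using Mv by auto
  have "gens d x' k = gens d x k" for k
  proof -
    have "gens d x' k = (if k = 0 then bil d (L_vec d x') (L_vec d x') else if k < d then bil d (u d k x') (u d k x') else 0)"
      unfolding gens_def u_def by simp
    also have "\<dots> = (if k = 0 then bil d (L_vec d x) (L_vec d x) else if k < d then bil d (u d k x) (u d k x) else 0)"
      unfolding V U B by simp
    also have "\<dots> = gens d x k" unfolding gens_def u_def by simp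
    finally show ?thesis .
  qed
  then show ?thesis by auto
qed



definition flip :: "nat set \<Rightarrow> (nat \<Rightarrow> complex) \<Rightarrow> (nat \<Rightarrow> complex)" where
  "flip T x = (\<lambda>i. if i \<in> T then - x i else x i)"

lemma Wd_sum: assumes "A \<in> Wd d" shows "(\<Sum>j<d. A i j * f j) = (if i < d then A i i * f i else 0)"
proof -
  have z: "A i j = 0" if "i \<noteq> j \<or> d \<le> i" for j using assms that unfolding Wd_def by blast
  have "(\<Sum>j<d. A i j * f j) = (\<Sum>j<d. if j = i then A i i * f i else 0)"
    by (rule sum.cong) (auto simp: z)
  also have "\<dots> = (if i < d then A i i * f i else 0)" by (simp add: sum.delta')
  finally show ?thesis .
qed

lemma Wd_sum': assumes "A \<in> Wd d" shows "(\<Sum>j<d. f j * A i j) = (if i < d then A i i * f i else 0)"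
  using Wd_sum[OF assms, of i f] by (simp add: mult.commute)

lemma W_act_formula:
  assumes A: "A \<in> Wd d" and d: "0 < d"
  shows "W_act_L d A x i = (if i = 0 then A (d-1) (d-1) * x 0 else if i < d then A (i-1) (i-1) * A i i * x i else 0)"
proof -
  have 0: "mat_vec d A (L_vec d x) (d-1) = A (d-1) (d-1) * x 0"
    unfolding mat_vec_def Wd_sum[OF A] using d by (simp add: L_vec_def)
  have 1: "mat_mul d (mat_mul d A (L_mat d x)) (transp A) (i-1) i = A (i-1) (i-1) * A i i * x i"
    if "0 < i" "i < d" for i
  proof -
    have "mat_mul d (mat_mul d A (L_mat d x)) (transp A) (i-1) i = mat_mul d A (L_mat d x) (i-1) i * A i i"
    proof -
      have "mat_mul d (mat_mul d A (L_mat d x)) (transp A) (i-1) i = (\<Sum>l<d. mat_mul d A (L_mat d x) (i-1) l * A i l)"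
        unfolding mat_mul_def[of d "mat_mul d A (L_mat d x)" "transp A"] by (simp add: transp_def)
      also have "\<dots> = mat_mul d A (L_mat d x) (i-1) i * A i i" unfolding Wd_sum'[OF A] using that by simp
      finally show ?thesis .
    qed
    also have "mat_mul d A (L_mat d x) (i-1) i = A (i-1) (i-1) * x i"
      unfolding mat_mul_def Wd_sum[OF A] using that by (simp add: L_mat_def)
    finally show ?thesis by simp
  qed
  show ?thesis unfolding W_act_L_def L_coord_def using 0 1 by auto
qed

lemma gens_W: assumes A: "A \<in> Wd d" and d: "0 < d" shows "gens d (W_act_L d A x) = gens d x"
proof (rule gens_sign[where e = "\<lambda>i. A i i"])
  show "\<forall>i<d. A i i * A i i = 1" using A unfolding Wd_def by auto
  show "W_act_L d A x 0 = A (d - 1) (d - 1) * x 0" using W_act_formula[OF A d] by simp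
  show "\<forall>j. 0 < j \<longrightarrow> j < d \<longrightarrow> W_act_L d A x j = A (j - 1) (j - 1) * A j j * x j"
    using W_act_formula[OF A d] by simp
qed

definition sg :: "nat set \<Rightarrow> nat \<Rightarrow> complex" where
  "sg T i = (if i \<in> T then -1 else 1)"

definition esg :: "nat \<Rightarrow> nat set \<Rightarrow> nat \<Rightarrow> complex" where
  "esg d T j = sg T 0 * (\<Prod>i\<in>{Suc j..<d}. sg T i)"

lemma sg_sq: "sg T i * sg T i = 1" by (simp add: sg_def)

lemma prod_sg_sq: "(\<Prod>i\<in>B. sg T i) * (\<Prod>i\<in>B. sg T i) = 1"
  by (simp add: prod.distrib[symmetric] sg_sq)

lemma esg_sq: "esg d T j * esg d T j = 1"
proof -
  have "esg d T j * esg d T j = (sg T 0 * sg T 0) * ((\<Prod>i\<in>{Suc j..<d}. sg T i) * (\<Prod>i\<in>{Suc j..<d}. sg T i))"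
    unfolding esg_def by (simp add: algebra_simps)
  then show ?thesis by (simp add: sg_sq prod_sg_sq)
qed

lemma esg_last: "0 < d \<Longrightarrow> esg d T (d - Suc 0) = sg T 0" unfolding esg_def by simp

lemma esg_step: assumes "0 < j" "j < d" shows "esg d T (j - Suc 0) * esg d T j = sg T j"
proof -
  have "{Suc (j-1)..<d} = {j..<d}" using assms by auto
  then have "esg d T (j-1) = sg T 0 * (sg T j * (\<Prod>i\<in>{Suc j..<d}. sg T i))"
    unfolding esg_def using assms by (simp add: prod.atLeast_Suc_lessThan)
  then have "esg d T (j-1) * esg d T j = sg T j * ((sg T 0 * sg T 0) * ((\<Prod>i\<in>{Suc j..<d}. sg T i) * (\<Prod>i\<in>{Suc j..<d}. sg T i)))"
    unfolding esg_def[of d T j] by (simp add: algebra_simps)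
  then show ?thesis by (simp add: sg_sq prod_sg_sq)
qed

lemma flip_sg: "flip T x i = sg T i * x i" unfolding flip_def sg_def by simp

lemma gens_flip: assumes d: "0 < d" shows "gens d (flip T x) = gens d x"
proof (rule gens_sign[where e = "esg d T"])
  show "\<forall>i<d. esg d T i * esg d T i = 1" by (simp add: esg_sq)
  show "flip T x 0 = esg d T (d - 1) * x 0" by (simp add: esg_last d flip_sg)
  show "\<forall>j. 0 < j \<longrightarrow> j < d \<longrightarrow> flip T x j = esg d T (j - 1) * esg d T j * x j"
    by (simp add: esg_step flip_sg)
qed

lemma W_flip: assumes d: "0 < d" shows "\<exists>A\<in>Wd d. \<forall>x. \<forall>i<d. W_act_L d A x i = flip T x i"
proof -
  define A where "A = (\<lambda>i j. if i = j \<and> i < d then esg d T i else 0)"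
  have pm: "esg d T i = 1 \<or> esg d T i = -1" for i
    using esg_sq[of d T i] by (metis power2_eq_1_iff power2_eq_square)
  have A: "A \<in> Wd d" unfolding Wd_def A_def using pm by auto
  have "W_act_L d A x i = flip T x i" if "i < d" for x i
    unfolding W_act_formula[OF A d] using that d
    by (auto simp: A_def esg_last esg_step flip_sg)
  then show ?thesis using A by blast
qed



lemma part1:
  assumes d: "0 < d" and r: "r \<in> gen_field d"
  shows "r \<in> rat_funs d \<and> W_invariant d r"
proof -
  obtain P Q where r: "r = (P \<circ> gens d, Q \<circ> gens d)" and P: "P \<in> poly_fun d" and Q: "Q \<in> poly_fun d"
    and nz: "\<exists>x. Q (gens d x) \<noteq> 0" using r unfolding gen_field_def by blast
  have "P \<circ> gens d \<in> poly_fun d" using pf_comp_gens[OF d P] by (simp add: comp_def)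
  moreover have "Q \<circ> gens d \<in> poly_fun d" using pf_comp_gens[OF d Q] by (simp add: comp_def)
  ultimately have "r \<in> rat_funs d" using nz r unfolding rat_funs_def by auto
  moreover have "W_invariant d r"
    unfolding W_invariant_def same_ratfun_def r using gens_W[OF _ d] by (simp add: mult.commute)
  ultimately show ?thesis by blast
qed

definition Om :: "nat \<Rightarrow> (nat \<Rightarrow> complex) set" where
  "Om d = {x. \<forall>i<d. x i \<noteq> 0}"

definition Phi :: "nat \<Rightarrow> ((nat \<Rightarrow> complex) \<Rightarrow> complex) set" where
  "Phi d = {G. \<exists>P Q. P \<in> poly_fun d \<and> Q \<in> poly_fun d \<and>
      (\<forall>x\<in>Om d. Q (gens d x) \<noteq> 0 \<and> G x * Q (gens d x) = P (gens d x))}"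

lemma PhiI: "P \<in> poly_fun d \<Longrightarrow> Q \<in> poly_fun d \<Longrightarrow>
   (\<And>x. x \<in> Om d \<Longrightarrow> Q (gens d x) \<noteq> 0 \<and> G x * Q (gens d x) = P (gens d x)) \<Longrightarrow> G \<in> Phi d"
  unfolding Phi_def by blast

lemma PhiE: assumes "G \<in> Phi d"
  obtains P Q where "P \<in> poly_fun d" "Q \<in> poly_fun d"
    "\<And>x. x \<in> Om d \<Longrightarrow> Q (gens d x) \<noteq> 0" "\<And>x. x \<in> Om d \<Longrightarrow> G x * Q (gens d x) = P (gens d x)"
  using assms unfolding Phi_def by blast

lemma phi_const: "(\<lambda>x. c) \<in> Phi d"
  by (rule PhiI[OF pf_const[of c] pf_const[of 1]]) simp

lemma phi_gens: "k < d \<Longrightarrow> (\<lambda>x. gens d x k) \<in> Phi d"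
  by (rule PhiI[OF pf_var[of k] pf_const[of 1]]) simp_all

lemma phi_add: assumes "F \<in> Phi d" "G \<in> Phi d" shows "(\<lambda>x. F x + G x) \<in> Phi d"
proof -
  obtain P1 Q1 where 1: "P1 \<in> poly_fun d" "Q1 \<in> poly_fun d"
    "\<And>x. x \<in> Om d \<Longrightarrow> Q1 (gens d x) \<noteq> 0" "\<And>x. x \<in> Om d \<Longrightarrow> F x * Q1 (gens d x) = P1 (gens d x)"
    by (rule PhiE[OF assms(1)]) blast
  obtain P2 Q2 where 2: "P2 \<in> poly_fun d" "Q2 \<in> poly_fun d"
    "\<And>x. x \<in> Om d \<Longrightarrow> Q2 (gens d x) \<noteq> 0" "\<And>x. x \<in> Om d \<Longrightarrow> G x * Q2 (gens d x) = P2 (gens d x)"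
    by (rule PhiE[OF assms(2)]) blast
  show ?thesis
  proof (rule PhiI[of "\<lambda>z. P1 z * Q2 z + P2 z * Q1 z" d "\<lambda>z. Q1 z * Q2 z"])
    show "(\<lambda>z. P1 z * Q2 z + P2 z * Q1 z) \<in> poly_fun d" using 1 2 by (intro pf_add pf_mult)
    show "(\<lambda>z. Q1 z * Q2 z) \<in> poly_fun d" using 1 2 by (intro pf_mult)
    fix x assume x: "x \<in> Om d"
    show "Q1 (gens d x) * Q2 (gens d x) \<noteq> 0 \<and>
      (F x + G x) * (Q1 (gens d x) * Q2 (gens d x)) = P1 (gens d x) * Q2 (gens d x) + P2 (gens d x) * Q1 (gens d x)"
      using 1(3,4)[OF x] 2(3,4)[OF x] by (auto simp: algebra_simps)
  qed
qed

lemma phi_mult: assumes "F \<in> Phi d" "G \<in> Phi d" shows "(\<lambda>x. F x * G x) \<in> Phi d"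
proof -
  obtain P1 Q1 where 1: "P1 \<in> poly_fun d" "Q1 \<in> poly_fun d"
    "\<And>x. x \<in> Om d \<Longrightarrow> Q1 (gens d x) \<noteq> 0" "\<And>x. x \<in> Om d \<Longrightarrow> F x * Q1 (gens d x) = P1 (gens d x)"
    by (rule PhiE[OF assms(1)]) blast
  obtain P2 Q2 where 2: "P2 \<in> poly_fun d" "Q2 \<in> poly_fun d"
    "\<And>x. x \<in> Om d \<Longrightarrow> Q2 (gens d x) \<noteq> 0" "\<And>x. x \<in> Om d \<Longrightarrow> G x * Q2 (gens d x) = P2 (gens d x)"
    by (rule PhiE[OF assms(2)]) blast
  show ?thesis
  proof (rule PhiI[of "\<lambda>z. P1 z * P2 z" d "\<lambda>z. Q1 z * Q2 z"])
    show "(\<lambda>z. P1 z * P2 z) \<in> poly_fun d" using 1 2 by (intro pf_mult)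
    show "(\<lambda>z. Q1 z * Q2 z) \<in> poly_fun d" using 1 2 by (intro pf_mult)
    fix x assume x: "x \<in> Om d"
    show "Q1 (gens d x) * Q2 (gens d x) \<noteq> 0 \<and>
      (F x * G x) * (Q1 (gens d x) * Q2 (gens d x)) = P1 (gens d x) * P2 (gens d x)"
      using 1(3,4)[OF x] 2(3,4)[OF x] by (auto simp: algebra_simps)
  qed
qed

lemma phi_cong: assumes "G \<in> Phi d" "\<And>x. x \<in> Om d \<Longrightarrow> F x = G x" shows "F \<in> Phi d"
proof -
  obtain P Q where 1: "P \<in> poly_fun d" "Q \<in> poly_fun d"
    "\<And>x. x \<in> Om d \<Longrightarrow> Q (gens d x) \<noteq> 0" "\<And>x. x \<in> Om d \<Longrightarrow> G x * Q (gens d x) = P (gens d x)"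
    by (rule PhiE[OF assms(1)]) blast
  show ?thesis by (rule PhiI[OF 1(1,2)]) (simp add: 1(3,4) assms(2))
qed

lemma phi_diff: assumes "F \<in> Phi d" "G \<in> Phi d" shows "(\<lambda>x. F x - G x) \<in> Phi d"
proof -
  have "(\<lambda>x. F x + (\<lambda>x. -1) x * G x) \<in> Phi d" using assms by (intro phi_add phi_mult phi_const)
  then show ?thesis by (rule phi_cong) simp
qed

lemma phi_div:
  assumes G: "G \<in> Phi d" and H: "H \<in> Phi d" and nz: "\<And>x. x \<in> Om d \<Longrightarrow> H x \<noteq> 0"
    and eq: "\<And>x. x \<in> Om d \<Longrightarrow> F x * H x = G x"
  shows "F \<in> Phi d"
proof -
  obtain P1 Q1 where 1: "P1 \<in> poly_fun d" "Q1 \<in> poly_fun d"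
    "\<And>x. x \<in> Om d \<Longrightarrow> Q1 (gens d x) \<noteq> 0" "\<And>x. x \<in> Om d \<Longrightarrow> G x * Q1 (gens d x) = P1 (gens d x)"
    by (rule PhiE[OF G]) blast
  obtain P2 Q2 where 2: "P2 \<in> poly_fun d" "Q2 \<in> poly_fun d"
    "\<And>x. x \<in> Om d \<Longrightarrow> Q2 (gens d x) \<noteq> 0" "\<And>x. x \<in> Om d \<Longrightarrow> H x * Q2 (gens d x) = P2 (gens d x)"
    by (rule PhiE[OF H]) blast
  show ?thesis
  proof (rule PhiI[of "\<lambda>z. P1 z * Q2 z" d "\<lambda>z. Q1 z * P2 z"])
    show "(\<lambda>z. P1 z * Q2 z) \<in> poly_fun d" using 1 2 by (intro pf_mult)
    show "(\<lambda>z. Q1 z * P2 z) \<in> poly_fun d" using 1 2 by (intro pf_mult)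
    fix x assume x: "x \<in> Om d"
    have a: "P2 (gens d x) \<noteq> 0" unfolding 2(4)[OF x, symmetric] using 2(3)[OF x] nz[OF x] by simp
    have "F x * (Q1 (gens d x) * P2 (gens d x)) = F x * H x * Q1 (gens d x) * Q2 (gens d x)"
      using 2(4)[OF x, symmetric] by (simp add: algebra_simps)
    also have "\<dots> = P1 (gens d x) * Q2 (gens d x)" using eq[OF x] 1(4)[OF x] by simp
    finally show "Q1 (gens d x) * P2 (gens d x) \<noteq> 0 \<and> F x * (Q1 (gens d x) * P2 (gens d x)) = P1 (gens d x) * Q2 (gens d x)"
      using a 1(3)[OF x] by simp
  qed
qed

lemma phi_sum: "finite A \<Longrightarrow> (\<And>a. a \<in> A \<Longrightarrow> f a \<in> Phi d) \<Longrightarrow> (\<lambda>x. \<Sum>a\<in>A. f a x) \<in> Phi d"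
proof (induction A rule: finite_induct)
  case empty then show ?case using phi_const[of 0] by simp
next
  case (insert a A) then show ?case by (simp add: phi_add)
qed

lemma phi_prod: "finite A \<Longrightarrow> (\<And>a. a \<in> A \<Longrightarrow> f a \<in> Phi d) \<Longrightarrow> (\<lambda>x. \<Prod>a\<in>A. f a x) \<in> Phi d"
proof (induction A rule: finite_induct)
  case empty then show ?case using phi_const[of 1] by simp
next
  case (insert a A) then show ?case by (simp add: phi_mult)
qed

lemma flip_Om: "x \<in> Om d \<Longrightarrow> flip T x \<in> Om d" unfolding Om_def flip_def by auto

lemma phi_inv: assumes d: "0 < d" and G: "G \<in> Phi d" and x: "x \<in> Om d" shows "G (flip T x) = G x"
proof -
  obtain P Q where 1: "\<And>x. x \<in> Om d \<Longrightarrow> Q (gens d x) \<noteq> 0" "\<And>x. x \<in> Om d \<Longrightarrow> G x * Q (gens d x) = P (gens d x)"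
    by (rule PhiE[OF G]) blast
  have "G (flip T x) * Q (gens d x) = P (gens d x)" using 1(2)[OF flip_Om[OF x]] gens_flip[OF d] by simp
  then have "G (flip T x) * Q (gens d x) = G x * Q (gens d x)" using 1(2)[OF x] by simp
  then show ?thesis using 1(1)[OF x] by simp
qed



definition proj :: "nat set \<Rightarrow> (nat \<Rightarrow> complex) \<Rightarrow> (nat \<Rightarrow> complex)" where
  "proj V x = (\<lambda>i. if i \<in> V then x i else 0)"

definition mon :: "nat set \<Rightarrow> (nat \<Rightarrow> complex) \<Rightarrow> complex" where
  "mon S x = (\<Prod>i\<in>S. x i)"

definition ymon :: "nat set \<Rightarrow> (nat \<Rightarrow> complex) \<Rightarrow> complex" where
  "ymon S x = (\<Prod>i\<in>S. x i * x i)"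

definition sd :: "nat set \<Rightarrow> nat set \<Rightarrow> nat set" where
  "sd S U = (S - U) \<union> (U - S)"

lemma mon_mult: assumes "finite S" "finite T"
  shows "mon S x * mon T x = mon (sd S T) x * ymon (S \<inter> T) x"
proof -
  have 1: "mon S x = mon (S - T) x * mon (S \<inter> T) x" unfolding mon_def
    using assms prod.union_disjoint[of "S - T" "S \<inter> T" x] by (metis Diff_disjoint Int_Diff_disjoint Un_Diff_Int finite_Diff finite_Int inf_commute)
  have 2: "mon T x = mon (T - S) x * mon (S \<inter> T) x" unfolding mon_def
    using assms prod.union_disjoint[of "T - S" "S \<inter> T" x] by (metis Int_Diff_disjoint Int_commute Un_Diff_Int finite_Diff finite_Int)
  have 3: "mon (sd S T) x = mon (S - T) x * mon (T - S) x" unfolding mon_def sd_def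
    using assms by (intro prod.union_disjoint) auto
  have 4: "ymon (S \<inter> T) x = mon (S \<inter> T) x * mon (S \<inter> T) x" unfolding mon_def ymon_def
    by (simp add: prod.distrib)
  show ?thesis unfolding 1 2 3 4 by (simp add: algebra_simps)
qed

lemma sd_sd: "sd S (sd S U) = U" unfolding sd_def by auto
lemma sd_Pow: "S \<subseteq> V \<Longrightarrow> U \<subseteq> V \<Longrightarrow> sd S U \<subseteq> V" unfolding sd_def by auto

lemma sum_Pow_sd: assumes "S \<subseteq> V" shows "(\<Sum>T\<in>Pow V. f T) = (\<Sum>U\<in>Pow V. f (sd S U))"
  by (rule sum.reindex_bij_witness[where i = "sd S" and j = "sd S"]) (auto simp: sd_sd sd_Pow assms)

lemma psi:
  assumes V: "V \<subseteq> {..<d}" and y: "\<And>j. j \<in> V \<Longrightarrow> (\<lambda>x. x j * x j) \<in> Phi d"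
    and F: "F \<in> poly_fun d"
  shows "\<exists>c. (\<forall>S\<in>Pow V. c S \<in> Phi d) \<and> (\<forall>x. F (proj V x) = (\<Sum>S\<in>Pow V. mon S x * c S x))"
  using F
proof (induction F rule: poly_fun.induct)
  have finV: "finite V" using V finite_subset by blast
  case (pf_const a)
  let ?c = "\<lambda>S x. if S = {} then a else 0"
  have "(\<Sum>S\<in>Pow V. mon S x * ?c S x) = a" for x
  proof -
    have "(\<Sum>S\<in>Pow V. mon S x * ?c S x) = (\<Sum>S\<in>Pow V. if S = {} then a else 0)"
      by (rule sum.cong) (auto simp: mon_def)
    also have "\<dots> = a" using finV by (simp add: sum.delta')
    finally show ?thesis .
  qed
  then show ?case by (intro exI[of _ ?c]) (auto intro: phi_const)
next
  have finV: "finite V" using V finite_subset by blast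
  case (pf_var i)
  show ?case
  proof (cases "i \<in> V")
    case True
    let ?c = "\<lambda>S x. if S = {i} then (1::complex) else 0"
    have "(\<Sum>S\<in>Pow V. mon S x * ?c S x) = x i" for x
    proof -
      have "(\<Sum>S\<in>Pow V. mon S x * ?c S x) = (\<Sum>S\<in>Pow V. if S = {i} then x i else 0)"
        by (rule sum.cong) (auto simp: mon_def)
      also have "\<dots> = x i" using finV True by (simp add: sum.delta')
      finally show ?thesis .
    qed
    then show ?thesis using True by (intro exI[of _ ?c]) (auto intro: phi_const simp: proj_def)
  next
    case False
    then show ?thesis by (intro exI[of _ "\<lambda>S x. 0"]) (auto intro: phi_const simp: proj_def)
  qed
next
  case (pf_add p q)
  then obtain c1 c2 where c1: "\<forall>S\<in>Pow V. c1 S \<in> Phi d" "\<forall>x. p (proj V x) = (\<Sum>S\<in>Pow V. mon S x * c1 S x)"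
    and c2: "\<forall>S\<in>Pow V. c2 S \<in> Phi d" "\<forall>x. q (proj V x) = (\<Sum>S\<in>Pow V. mon S x * c2 S x)" by blast
  show ?case
    apply (intro exI[of _ "\<lambda>S x. c1 S x + c2 S x"] conjI ballI allI)
    using c1 c2 by (auto intro: phi_add simp: sum.distrib algebra_simps)
next
  have finV: "finite V" using V finite_subset by blast
  case (pf_mult p q)
  then obtain c1 c2 where c1: "\<forall>S\<in>Pow V. c1 S \<in> Phi d" "\<forall>x. p (proj V x) = (\<Sum>S\<in>Pow V. mon S x * c1 S x)"
    and c2: "\<forall>S\<in>Pow V. c2 S \<in> Phi d" "\<forall>x. q (proj V x) = (\<Sum>S\<in>Pow V. mon S x * c2 S x)" by blast
  let ?c = "\<lambda>U x. \<Sum>S\<in>Pow V. ymon (S - U) x * c1 S x * c2 (sd S U) x"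
  have "p (proj V x) * q (proj V x) = (\<Sum>U\<in>Pow V. mon U x * ?c U x)" for x
  proof -
    have "p (proj V x) * q (proj V x) = (\<Sum>S\<in>Pow V. \<Sum>T\<in>Pow V. (mon S x * c1 S x) * (mon T x * c2 T x))"
      using c1(2) c2(2) by (simp add: sum_product)
    also have "\<dots> = (\<Sum>S\<in>Pow V. \<Sum>T\<in>Pow V. mon (sd S T) x * ymon (S \<inter> T) x * c1 S x * c2 T x)"
    proof (intro sum.cong refl)
      fix S T assume "S \<in> Pow V" "T \<in> Pow V"
      then have "finite S" "finite T" using finV finite_subset by auto
      then show "(mon S x * c1 S x) * (mon T x * c2 T x) = mon (sd S T) x * ymon (S \<inter> T) x * c1 S x * c2 T x"
        using mon_mult[of S T x] by (simp add: algebra_simps)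
    qed
    also have "\<dots> = (\<Sum>S\<in>Pow V. \<Sum>U\<in>Pow V. mon U x * (ymon (S - U) x * c1 S x * c2 (sd S U) x))"
    proof (rule sum.cong[OF refl])
      fix S assume S: "S \<in> Pow V"
      have "(\<Sum>T\<in>Pow V. mon (sd S T) x * ymon (S \<inter> T) x * c1 S x * c2 T x)
          = (\<Sum>U\<in>Pow V. mon (sd S (sd S U)) x * ymon (S \<inter> sd S U) x * c1 S x * c2 (sd S U) x)"
        using S by (intro sum_Pow_sd) auto
      also have "\<dots> = (\<Sum>U\<in>Pow V. mon U x * (ymon (S - U) x * c1 S x * c2 (sd S U) x))"
      proof (rule sum.cong[OF refl])
        fix U
        have "S \<inter> sd S U = S - U" unfolding sd_def by auto
        then show "mon (sd S (sd S U)) x * ymon (S \<inter> sd S U) x * c1 S x * c2 (sd S U) x = mon U x * (ymon (S - U) x * c1 S x * c2 (sd S U) x)"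
          by (simp add: sd_sd algebra_simps)
      qed
      finally show "(\<Sum>T\<in>Pow V. mon (sd S T) x * ymon (S \<inter> T) x * c1 S x * c2 T x) = (\<Sum>U\<in>Pow V. mon U x * (ymon (S - U) x * c1 S x * c2 (sd S U) x))" .
    qed
    also have "\<dots> = (\<Sum>U\<in>Pow V. mon U x * ?c U x)"
      by (subst sum.swap) (simp add: sum_distrib_left)
    finally show ?thesis .
  qed
  moreover have "?c U \<in> Phi d" if "U \<in> Pow V" for U
  proof (rule phi_sum)
    show "finite (Pow V)" using finV by simp
    fix S assume S: "S \<in> Pow V"
    have "ymon (S - U) \<in> Phi d" unfolding ymon_def
      using S finV finite_subset by (intro phi_prod y) auto
    moreover have "sd S U \<in> Pow V" using S that sd_Pow by auto
    ultimately show "(\<lambda>x. ymon (S - U) x * c1 S x * c2 (sd S U) x) \<in> Phi d"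
      using S c1(1) c2(1) by (intro phi_mult) auto
  qed
  ultimately show ?case by (intro exI[of _ ?c]) auto
qed

lemma prod_sg: "finite S \<Longrightarrow> (\<Prod>i\<in>S. sg T i) = (-1) ^ card (S \<inter> T)"
proof -
  assume S: "finite S"
  have "(\<Prod>i\<in>S. sg T i) = (\<Prod>i\<in>S. if i \<in> T then -1 else 1)" unfolding sg_def by simp
  also have "\<dots> = (\<Prod>i\<in>S \<inter> {i. i \<in> T}. -1) * (\<Prod>i\<in>S \<inter> - {i. i \<in> T}. 1)"
    by (rule prod.If_cases[OF S])
  also have "\<dots> = (-1) ^ card (S \<inter> T)" by simp
  finally show ?thesis .
qed

lemma mon_flip: "finite S \<Longrightarrow> mon S (flip T x) = (-1) ^ card (S \<inter> T) * mon S x"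
  unfolding mon_def flip_sg by (simp add: prod.distrib prod_sg)

lemma char_sum: assumes V: "finite (V::nat set)" and S: "S \<subseteq> V"
  shows "(\<Sum>T\<in>Pow V. (-1::complex) ^ card (S \<inter> T)) = (if S = {} then 2 ^ card V else 0)"
proof -
  have "(\<Sum>T\<in>Pow V. (-1::complex) ^ card (S \<inter> T)) = (\<Sum>T\<in>Pow V. (\<Prod>i\<in>T. sg S i) * (\<Prod>i\<in>V - T. 1))"
  proof (rule sum.cong[OF refl])
    fix T assume "T \<in> Pow V"
    then have "finite T" using V finite_subset by auto
    then show "(-1::complex) ^ card (S \<inter> T) = (\<Prod>i\<in>T. sg S i) * (\<Prod>i\<in>V - T. 1)"
      by (simp add: prod_sg Int_commute)
  qed
  also have "\<dots> = (\<Prod>i\<in>V. sg S i + 1)" by (rule prod_add[symmetric, OF V])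
  also have "\<dots> = (if S = {} then 2 ^ card V else 0)"
  proof (cases "S = {}")
    case True then show ?thesis by (simp add: sg_def)
  next
    case False
    then obtain i where "i \<in> S" by blast
    then have "i \<in> V" "sg S i + 1 = 0" using S by (auto simp: sg_def)
    then show ?thesis using False V by (auto simp: prod_zero_iff)
  qed
  finally show ?thesis .
qed

lemma avg:
  assumes d: "0 < d" and V: "V \<subseteq> {..<d}" and y: "\<And>j. j \<in> V \<Longrightarrow> (\<lambda>x. x j * x j) \<in> Phi d"
    and F: "F \<in> poly_fun d"
  shows "(\<lambda>x. \<Sum>T\<in>Pow V. F (proj V (flip T x))) \<in> Phi d"
proof -
  have finV: "finite V" using V finite_subset by blast
  obtain c where c1: "\<forall>S\<in>Pow V. c S \<in> Phi d" and c2: "\<forall>x. F (proj V x) = (\<Sum>S\<in>Pow V. mon S x * c S x)"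
    using psi[OF V y F] by blast
  have eq: "(\<Sum>T\<in>Pow V. F (proj V (flip T x))) = 2 ^ card V * c {} x" if x: "x \<in> Om d" for x
  proof -
    have "(\<Sum>T\<in>Pow V. F (proj V (flip T x))) = (\<Sum>T\<in>Pow V. \<Sum>S\<in>Pow V. mon S (flip T x) * c S (flip T x))"
      using c2 by simp
    also have "\<dots> = (\<Sum>T\<in>Pow V. \<Sum>S\<in>Pow V. (mon S x * c S x) * (-1) ^ card (S \<inter> T))"
    proof (intro sum.cong refl)
      fix T S assume "S \<in> Pow V"
      then have "finite S" "c S \<in> Phi d" using finV finite_subset c1 by auto
      then show "mon S (flip T x) * c S (flip T x) = (mon S x * c S x) * (-1) ^ card (S \<inter> T)"
        by (simp add: mon_flip phi_inv[OF d _ x])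
    qed
    also have "\<dots> = (\<Sum>S\<in>Pow V. (mon S x * c S x) * (\<Sum>T\<in>Pow V. (-1) ^ card (S \<inter> T)))"
      by (subst sum.swap) (simp add: sum_distrib_left)
    also have "\<dots> = (\<Sum>S\<in>Pow V. if S = {} then 2 ^ card V * c {} x else 0)"
      by (rule sum.cong[OF refl]) (auto simp: char_sum[OF finV] mon_def)
    also have "\<dots> = 2 ^ card V * c {} x" using finV by (simp add: sum.delta')
    finally show ?thesis .
  qed
  have ph: "(\<lambda>x. 2 ^ card V * c {} x) \<in> Phi d" using c1 by (intro phi_mult phi_const) auto
  show ?thesis by (rule phi_cong[OF ph]) (rule eq)
qed



lemma u_Suc: "u d (Suc k) x = mat_vec d (L_mat d x) (u d k x)"
  unfolding u_def mat_pow.simps mat_vec_def mat_mul_def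
  by (auto simp: sum_distrib_left sum_distrib_right mult.assoc intro: sum.swap)

lemma Lmat_vec: "mat_vec d (L_mat d x) w i =
   (if i + 1 < d then x (i+1) * w (i+1) else 0) - (if 0 < i \<and> i < d then x i * w (i-1) else 0)"
proof -
  have "mat_vec d (L_mat d x) w i = (\<Sum>j<d. (if j = i + 1 then (if i + 1 < d then x (i+1) * w (i+1) else 0) else 0)
     - (if j = i - 1 then (if 0 < i \<and> i < d then x i * w (i-1) else 0) else 0))"
    unfolding mat_vec_def by (rule sum.cong) (auto simp: L_mat_def)
  also have "\<dots> = (if i + 1 < d then x (i+1) * w (i+1) else 0) - (if 0 < i \<and> i < d then x i * w (i-1) else 0)"
    by (auto simp: sum_subtractf sum.delta')
  finally show ?thesis .
qed

lemma u_rec: "u d (Suc k) x i =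
   (if i + 1 < d then x (i+1) * u d k x (i+1) else 0) - (if 0 < i \<and> i < d then x i * u d k x (i-1) else 0)"
  unfolding u_Suc Lmat_vec ..

definition dep :: "nat set \<Rightarrow> ((nat \<Rightarrow> complex) \<Rightarrow> complex) \<Rightarrow> bool" where
  "dep V f = (\<forall>x x'. (\<forall>j\<in>V. x j = x' j) \<longrightarrow> f x = f x')"

definition Vs :: "nat \<Rightarrow> nat \<Rightarrow> nat set" where
  "Vs d k = insert 0 {d-k..<d}"

definition lead :: "nat \<Rightarrow> nat \<Rightarrow> (nat \<Rightarrow> complex) \<Rightarrow> complex" where
  "lead d k x = x 0 * (\<Prod>j\<in>{d-k..<d}. x j)"

lemma u_zero: "u d 0 x i = (if i < d then L_vec d x i else 0)"
proof -
  have "u d 0 x i = (\<Sum>j<d. if j = i then (if i < d then L_vec d x i else 0) else 0)"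
    unfolding u_def mat_pow.simps mat_vec_def id_mat_def by (rule sum.cong) auto
  also have "\<dots> = (if i < d then L_vec d x i else 0)" by (simp add: sum.delta')
  finally show ?thesis .
qed

lemma u_struct:
  assumes "k < d"
  shows "(\<forall>x i. i + k + 1 < d \<longrightarrow> u d k x i = 0) \<and> (\<forall>x. u d k x (d - 1 - k) = lead d k x)
     \<and> (\<forall>i. d - k \<le> i \<longrightarrow> i < d \<longrightarrow> dep (Vs d (k - 1)) (\<lambda>x. u d k x i))"
  using assms
proof (induction k)
  case 0
  then show ?case by (auto simp: u_zero L_vec_def lead_def)
next
  case (Suc k)
  then have IH: "\<And>x i. i + k + 1 < d \<Longrightarrow> u d k x i = 0" "\<And>x. u d k x (d - 1 - k) = lead d k x"
     "\<And>i. d - k \<le> i \<Longrightarrow> i < d \<Longrightarrow> dep (Vs d (k - 1)) (\<lambda>x. u d k x i)" by auto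
  have Z: "u d (Suc k) x i = 0" if "i + Suc k + 1 < d" for x i
    unfolding u_rec using that IH(1)[of "i+1" x] IH(1)[of "i-1" x] by auto
  have L: "u d (Suc k) x (d - 1 - Suc k) = lead d (Suc k) x" for x
  proof -
    have a: "d - 1 - Suc k + 1 = d - 1 - k" "d - 1 - Suc k + 1 < d" using Suc.prems by auto
    have b: "(if 0 < d - 1 - Suc k \<and> d - 1 - Suc k < d then x (d - 1 - Suc k) * u d k x (d - 1 - Suc k - 1) else 0) = 0"
    proof (cases "0 < d - 1 - Suc k")
      case True
      then have "d - 1 - Suc k - 1 + k + 1 < d" by arith
      then show ?thesis using IH(1)[of "d - 1 - Suc k - 1" x] by simp
    qed simp
    have c: "{d - Suc k..<d} = insert (d - Suc k) {d-k..<d}" using Suc.prems by auto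
    have "u d (Suc k) x (d - 1 - Suc k) = x (d - 1 - k) * lead d k x"
      unfolding u_rec a b IH(2) using a(2) by simp
    also have "\<dots> = lead d (Suc k) x" unfolding lead_def c using Suc.prems
      by (simp add: algebra_simps)
    finally show ?thesis .
  qed
  have sub: "Vs d (k - 1) \<subseteq> Vs d k" unfolding Vs_def by auto
  have D: "dep (Vs d k) (\<lambda>x. u d (Suc k) x i)" if i: "d - Suc k \<le> i" "i < d" for i
    unfolding dep_def
  proof (intro allI impI)
    fix x x' :: "nat \<Rightarrow> complex" assume xx: "\<forall>j\<in>Vs d k. x j = x' j"
    have t1: "(if i + 1 < d then x (i+1) * u d k x (i+1) else 0) = (if i + 1 < d then x' (i+1) * u d k x' (i+1) else 0)"
    proof (cases "i + 1 < d")
      case True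
      then have "i + 1 \<in> Vs d k" using i unfolding Vs_def by auto
      moreover have "u d k x (i+1) = u d k x' (i+1)"
      proof -
        have "d - k \<le> i + 1" using i by arith
        then have "dep (Vs d (k - 1)) (\<lambda>x. u d k x (i+1))" using IH(3)[of "i+1"] True by blast
        moreover have "\<forall>j\<in>Vs d (k - 1). x j = x' j" using xx sub by blast
        ultimately show ?thesis unfolding dep_def by blast
      qed
      ultimately show ?thesis using xx by auto
    qed simp
    have t2: "(if 0 < i \<and> i < d then x i * u d k x (i-1) else 0) = (if 0 < i \<and> i < d then x' i * u d k x' (i-1) else 0)"
    proof (cases "0 < i")
      case True
      consider "i + k < d" | "i = d - k" | "d - k < i" using i by linarith
      then show ?thesis
      proof cases
        case 1 then show ?thesis using IH(1)[of "i-1" x] IH(1)[of "i-1" x'] True by auto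
      next
        case 2
        then have "i - 1 = d - 1 - k" using Suc.prems by auto
        moreover have "lead d k x = lead d k x'" unfolding lead_def using xx unfolding Vs_def by auto
        moreover have "i \<in> Vs d k" using 2 i unfolding Vs_def by auto
        ultimately show ?thesis using IH(2) xx by auto
      next
        case 3
        then have "d - k \<le> i - 1" by arith
        then have "dep (Vs d (k - 1)) (\<lambda>x. u d k x (i-1))" using IH(3)[of "i-1"] i by auto
        moreover have "\<forall>j\<in>Vs d (k - 1). x j = x' j" using xx sub by blast
        ultimately have "u d k x (i-1) = u d k x' (i-1)" unfolding dep_def by blast
        moreover have "i \<in> Vs d k" using 3 i unfolding Vs_def by auto
        ultimately show ?thesis using xx by auto
      qed
    qed simp
    show "u d (Suc k) x i = u d (Suc k) x' i" unfolding u_rec t1 t2 ..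
  qed
  show ?case using Z L D by auto
qed



definition R :: "nat \<Rightarrow> nat \<Rightarrow> (nat \<Rightarrow> complex) \<Rightarrow> complex" where
  "R d k x = (\<Sum>i\<in>{d-k..<d}. u d k x i * u d k x i)"

lemma gens_decomp: assumes k: "1 \<le> k" "k < d"
  shows "gens d x k = lead d k x * lead d k x + R d k x"
proof -
  let ?f = "\<lambda>i. u d k x i * u d k x i"
  have "gens d x k = (\<Sum>i<d. ?f i)" using k unfolding gens_def bil_def u_def by simp
  also have "\<dots> = (\<Sum>i\<in>{0..<d-k}. ?f i) + (\<Sum>i\<in>{d-k..<d}. ?f i)"
    by (simp add: atLeast0LessThan[symmetric] sum.atLeastLessThan_concat)
  also have "(\<Sum>i\<in>{0..<d-k}. ?f i) = (\<Sum>i\<in>{0..<d-1-k}. ?f i) + ?f (d-1-k)"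
  proof -
    have "d - k = Suc (d - 1 - k)" using k by auto
    then show ?thesis by simp
  qed
  also have "(\<Sum>i\<in>{0..<d-1-k}. ?f i) = 0"
    using u_struct[OF k(2)] by (intro sum.neutral) auto
  finally show ?thesis using u_struct[OF k(2)] unfolding R_def by simp
qed

lemma pf_R: "0 < d \<Longrightarrow> R d k \<in> poly_fun d"
proof -
  assume d: "0 < d"
  have "(\<lambda>x. \<Sum>i\<in>{d-k..<d}. u d k x i * u d k x i) \<in> poly_fun d"
    by (intro pf_sum pf_mult pf_u d) auto
  then show ?thesis unfolding R_def by simp
qed

lemma dep_R: assumes k: "k < d" shows "dep (Vs d (k - 1)) (R d k)"
  unfolding dep_def R_def
proof (intro allI impI sum.cong refl)
  fix x x' i assume xx: "\<forall>j\<in>Vs d (k - 1). x j = (x' :: nat \<Rightarrow> complex) j" and i: "i \<in> {d - k..<d}"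
  then have "u d k x i = u d k x' i" using u_struct[OF k] unfolding dep_def by auto
  then show "u d k x i * u d k x i = u d k x' i * u d k x' i" by simp
qed

lemma lead_flip: "lead d k (flip T x) * lead d k (flip T x) = lead d k x * lead d k x"
proof -
  have "lead d k (flip T x) = (sg T 0 * (\<Prod>j\<in>{d-k..<d}. sg T j)) * lead d k x"
    unfolding lead_def flip_sg by (simp add: prod.distrib algebra_simps)
  then have "lead d k (flip T x) * lead d k (flip T x) = (sg T 0 * sg T 0) * ((\<Prod>j\<in>{d-k..<d}. sg T j) * (\<Prod>j\<in>{d-k..<d}. sg T j)) * (lead d k x * lead d k x)"
    by (simp add: algebra_simps)
  then show ?thesis by (simp add: sg_sq prod_sg_sq)
qed

lemma R_flip: assumes k: "1 \<le> k" "k < d" shows "R d k (flip T x) = R d k x"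
proof -
  have "0 < d" using k by auto
  then have "gens d (flip T x) k = gens d x k" using gens_flip by simp
  then show ?thesis unfolding gens_decomp[OF k] lead_flip by simp
qed

lemma Vs_sub: "0 < d \<Longrightarrow> Vs d k \<subseteq> {..<d}" unfolding Vs_def by auto

lemma R_Phi: assumes k: "1 \<le> k" "k < d" and y: "\<And>j. j \<in> Vs d (k - 1) \<Longrightarrow> (\<lambda>x. x j * x j) \<in> Phi d"
  shows "R d k \<in> Phi d"
proof -
  have d: "0 < d" using k by auto
  let ?V = "Vs d (k - 1)"
  have A: "(\<lambda>x. \<Sum>T\<in>Pow ?V. R d k (proj ?V (flip T x))) \<in> Phi d"
    using avg[OF d Vs_sub[OF d] y pf_R[OF d]] by blast
  have finV: "finite ?V" unfolding Vs_def by simp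
  have "(\<Sum>T\<in>Pow ?V. R d k (proj ?V (flip T x))) = 2 ^ card ?V * R d k x" for x
  proof -
    have "R d k (proj ?V (flip T x)) = R d k x" for T
    proof -
      have "R d k (proj ?V (flip T x)) = R d k (flip T x)"
        using dep_R[OF k(2)] unfolding dep_def proj_def by auto
      then show ?thesis using R_flip[OF k] by simp
    qed
    then show ?thesis using finV by (simp add: card_Pow)
  qed
  then have "(\<lambda>x. (1 / 2 ^ card ?V) * (\<Sum>T\<in>Pow ?V. R d k (proj ?V (flip T x)))) = R d k" by auto
  moreover have "(\<lambda>x. (1 / 2 ^ card ?V) * (\<Sum>T\<in>Pow ?V. R d k (proj ?V (flip T x)))) \<in> Phi d"
    using A by (intro phi_mult phi_const)
  ultimately show ?thesis by simp
qed

lemma Om_nz: "x \<in> Om d \<Longrightarrow> j < d \<Longrightarrow> x j \<noteq> 0" unfolding Om_def by auto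

lemma y_step: assumes k: "1 \<le> k" "k < d" and y: "\<And>j. j \<in> Vs d (k - 1) \<Longrightarrow> (\<lambda>x. x j * x j) \<in> Phi d"
  shows "(\<lambda>x. x (d - k) * x (d - k)) \<in> Phi d"
proof (rule phi_div)
  have d: "0 < d" using k by auto
  show "(\<lambda>x. gens d x k - R d k x) \<in> Phi d" using R_Phi[OF k y] phi_gens[OF k(2)] by (intro phi_diff)
  show "ymon (Vs d (k - 1)) \<in> Phi d" unfolding ymon_def using y
    by (intro phi_prod) (auto simp: Vs_def)
  fix x assume x: "x \<in> Om d"
  show "ymon (Vs d (k - 1)) x \<noteq> 0" unfolding ymon_def using Om_nz[OF x] Vs_sub[OF d]
    by (auto simp: Vs_def)
  have 0: "0 \<notin> {d - (k - 1)..<d}" using k by auto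
  have c: "{d - k..<d} = insert (d - k) {d - (k - 1)..<d}" using k by auto
  have "gens d x k - R d k x = lead d k x * lead d k x" using gens_decomp[OF k] by simp
  also have "\<dots> = x (d - k) * x (d - k) * ymon (Vs d (k - 1)) x"
    unfolding lead_def ymon_def Vs_def c using 0 k by (simp add: prod.distrib algebra_simps)
  finally show "x (d - k) * x (d - k) * ymon (Vs d (k - 1)) x = gens d x k - R d k x" by simp
qed

lemma y_all: assumes d: "0 < d" shows "k < d \<Longrightarrow> \<forall>j\<in>Vs d k. (\<lambda>x. x j * x j) \<in> Phi d"
proof (induction k)
  case 0
  have "gens d x 0 = x 0 * x 0" for x
  proof -
    have "gens d x 0 = (\<Sum>i<d. L_vec d x i * L_vec d x i)" unfolding gens_def bil_def by simp
    also have "\<dots> = (\<Sum>i<d. if i = d - 1 then x 0 * x 0 else 0)"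
      by (rule sum.cong) (auto simp: L_vec_def)
    also have "\<dots> = x 0 * x 0" using d by (simp add: sum.delta')
    finally show ?thesis .
  qed
  then have "(\<lambda>x. x 0 * x 0) \<in> Phi d" using phi_gens[OF d] by (metis (no_types, lifting) ext)
  then show ?case unfolding Vs_def by simp
next
  case (Suc k)
  then have IH: "\<And>j. j \<in> Vs d k \<Longrightarrow> (\<lambda>x. x j * x j) \<in> Phi d" by auto
  have "(\<lambda>x. x (d - Suc k) * x (d - Suc k)) \<in> Phi d" using y_step[of "Suc k" d] IH Suc.prems by simp
  moreover have "Vs d (Suc k) = insert (d - Suc k) (Vs d k)" using Suc.prems unfolding Vs_def by auto
  ultimately show ?case using IH by auto
qed

lemma y_Phi: assumes d: "0 < d" and j: "j < d" shows "(\<lambda>x. x j * x j) \<in> Phi d"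
proof -
  have "Vs d (d - 1) = {..<d}" using d unfolding Vs_def by auto
  then show ?thesis using y_all[OF d, of "d - 1"] d j by auto
qed



lemma pf_flip: "f \<in> poly_fun d \<Longrightarrow> (\<lambda>x. f (flip T x)) \<in> poly_fun d"
proof (induction f rule: poly_fun.induct)
  case (pf_var i)
  show ?case
  proof (cases "i \<in> T")
    case True then show ?thesis unfolding flip_def using pf_neg[OF poly_fun.pf_var[OF pf_var]] by simp
  next
    case False then show ?thesis unfolding flip_def using poly_fun.pf_var[OF pf_var] by simp
  qed
qed (auto intro: poly_fun.intros)

lemma flip_flip: "flip U (flip T x) = flip (sd U T) x" unfolding flip_def sd_def by auto
lemma flip_empty: "flip {} x = x" unfolding flip_def by simp
lemma flip_invol: "flip T (flip T x) = x" unfolding flip_def by auto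

lemma pf_prod_nonzero: "finite A \<Longrightarrow> (\<And>a. a \<in> A \<Longrightarrow> f a \<in> poly_fun d \<and> (\<exists>x. f a x \<noteq> 0))
   \<Longrightarrow> \<exists>x. (\<Prod>a\<in>A. f a x) \<noteq> 0"
proof (induction A rule: finite_induct)
  case empty then show ?case by simp
next
  case (insert a A)
  then obtain x0 where x0: "(\<Prod>a\<in>A. f a x0) \<noteq> 0" by blast
  obtain x1 where x1: "f a x1 \<noteq> 0" using insert.prems by blast
  have "(\<lambda>x. \<Prod>a\<in>A. f a x) \<in> poly_fun d" using insert by (intro pf_prod) auto
  moreover have "f a \<in> poly_fun d" using insert.prems by blast
  ultimately obtain x where "f a x * (\<Prod>a\<in>A. f a x) \<noteq> 0"
    using pf_nonzero_mult[of "f a" d "\<lambda>x. \<Prod>a\<in>A. f a x" x1 x0] x0 x1 by blast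
  then show ?case using insert by auto
qed

lemma part2:
  assumes d: "0 < d" and r: "r \<in> rat_funs d" and inv: "W_invariant d r"
  shows "\<exists>s\<in>gen_field d. same_ratfun r s"
proof -
  obtain p q where r: "r = (p, q)" and p: "p \<in> poly_fun d" and q: "q \<in> poly_fun d"
    and qnz: "\<exists>x. q x \<noteq> 0" using assms unfolding rat_funs_def by auto
  have pinv: "p (flip T x) * q x = p x * q (flip T x)" for T x
  proof -
    obtain A where A: "A \<in> Wd d" "\<forall>x. \<forall>i<d. W_act_L d A x i = flip T x i" using W_flip[OF d] by blast
    have "p (W_act_L d A x) * q x = p x * q (W_act_L d A x)"
      using inv A(1) unfolding W_invariant_def same_ratfun_def r by auto
    moreover have "p (W_act_L d A x) = p (flip T x)" "q (W_act_L d A x) = q (flip T x)"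
      using pf_dep[OF p] pf_dep[OF q] A(2) by auto
    ultimately show ?thesis by simp
  qed
  define Pw where "Pw = Pow {..<d}"
  have finPw: "finite Pw" unfolding Pw_def by simp
  have ePw: "{} \<in> Pw" unfolding Pw_def by simp
  define qs where "qs x = (\<Prod>T\<in>Pw - {{}}. q (flip T x))" for x
  define N where "N x = p x * qs x" for x
  define Den where "Den x = (\<Prod>T\<in>Pw. q (flip T x))" for x
  define aN where "aN x = (\<Sum>T\<in>Pw. N (flip T x))" for x
  define aD where "aD x = (\<Sum>T\<in>Pw. Den (flip T x))" for x
  have Den_eq: "Den x = q x * qs x" for x
    unfolding Den_def qs_def using prod.remove[OF finPw ePw, of "\<lambda>T. q (flip T x)"] by (simp add: flip_empty)
  have pfqs: "qs \<in> poly_fun d" unfolding qs_def[abs_def] using finPw by (intro pf_prod pf_flip q) auto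
  have pfN: "N \<in> poly_fun d" unfolding N_def[abs_def] using p pfqs by (intro pf_mult)
  have pfDen: "Den \<in> poly_fun d" unfolding Den_def[abs_def] using finPw by (intro pf_prod pf_flip q) auto
  have y: "\<And>j. j \<in> {..<d} \<Longrightarrow> (\<lambda>x. x j * x j) \<in> Phi d" using y_Phi[OF d] by auto
  have projd: "F (proj {..<d} z) = F z" if "F \<in> poly_fun d" for F z
    using pf_dep[OF that] unfolding proj_def by auto
  have aN: "aN \<in> Phi d"
  proof -
    have "(\<lambda>x. \<Sum>T\<in>Pow {..<d}. N (proj {..<d} (flip T x))) \<in> Phi d" by (rule avg[OF d _ y pfN]) simp
    then show ?thesis unfolding aN_def[abs_def] Pw_def projd[OF pfN] .
  qed
  have aD: "aD \<in> Phi d"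
  proof -
    have "(\<lambda>x. \<Sum>T\<in>Pow {..<d}. Den (proj {..<d} (flip T x))) \<in> Phi d" by (rule avg[OF d _ y pfDen]) simp
    then show ?thesis unfolding aD_def[abs_def] Pw_def projd[OF pfDen] .
  qed
  have key: "aN x * q x = p x * aD x" for x
  proof -
    have "aN x * q x = (\<Sum>T\<in>Pw. p (flip T x) * q x * qs (flip T x))"
      unfolding aN_def N_def by (simp add: sum_distrib_left sum_distrib_right algebra_simps)
    also have "\<dots> = (\<Sum>T\<in>Pw. p x * Den (flip T x))"
      by (rule sum.cong[OF refl]) (simp add: pinv Den_eq)
    also have "\<dots> = p x * aD x" unfolding aD_def by (simp add: sum_distrib_left)
    finally show ?thesis .
  qed
  have Den_flip: "Den (flip T x) = Den x" if "T \<in> Pw" for T x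
  proof -
    have "Den (flip T x) = (\<Prod>U\<in>Pw. q (flip (sd U T) x))" unfolding Den_def flip_flip ..
    also have "\<dots> = Den x" unfolding Den_def
      by (rule prod.reindex_bij_witness[where i = "\<lambda>U. sd U T" and j = "\<lambda>U. sd U T"])
         (use that in \<open>auto simp: Pw_def sd_def\<close>)
    finally show ?thesis .
  qed
  have aD_eq: "aD x = of_nat (card Pw) * Den x" for x unfolding aD_def using Den_flip by simp
  obtain P1 Q1 where 1: "P1 \<in> poly_fun d" "Q1 \<in> poly_fun d"
    "\<And>x. x \<in> Om d \<Longrightarrow> Q1 (gens d x) \<noteq> 0" "\<And>x. x \<in> Om d \<Longrightarrow> aN x * Q1 (gens d x) = P1 (gens d x)"
    by (rule PhiE[OF aN]) blast
  obtain P2 Q2 where 2: "P2 \<in> poly_fun d" "Q2 \<in> poly_fun d"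
    "\<And>x. x \<in> Om d \<Longrightarrow> Q2 (gens d x) \<noteq> 0" "\<And>x. x \<in> Om d \<Longrightarrow> aD x * Q2 (gens d x) = P2 (gens d x)"
    by (rule PhiE[OF aD]) blast
  define P where "P z = P1 z * Q2 z" for z
  define Q where "Q z = P2 z * Q1 z" for z
  have pfP: "P \<in> poly_fun d" unfolding P_def[abs_def] using 1 2 by (intro pf_mult)
  have pfQ: "Q \<in> poly_fun d" unfolding Q_def[abs_def] using 1 2 by (intro pf_mult)
  define h where "h x = p x * Q (gens d x) - P (gens d x) * q x" for x
  have pfh: "h \<in> poly_fun d" unfolding h_def[abs_def]
    using p q pf_comp_gens[OF d pfP] pf_comp_gens[OF d pfQ] by (intro pf_diff pf_mult)
  have hOm: "h x = 0" if x: "x \<in> Om d" for x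
  proof -
    have "p x * Q (gens d x) = p x * aD x * Q2 (gens d x) * Q1 (gens d x)"
      unfolding Q_def 2(4)[OF x, symmetric] by (simp add: algebra_simps)
    also have "\<dots> = aN x * Q1 (gens d x) * Q2 (gens d x) * q x" unfolding key[symmetric] by (simp add: algebra_simps)
    also have "\<dots> = P (gens d x) * q x" unfolding 1(4)[OF x] P_def ..
    finally show ?thesis unfolding h_def by simp
  qed
  have pfm: "(\<lambda>x. \<Prod>i<d. x i) \<in> poly_fun d" by (intro pf_prod pf_var) auto
  have h0: "h x = 0" for x
  proof (rule ccontr)
    assume "h x \<noteq> 0"
    moreover have "(\<Prod>i<d. (\<lambda>_. 1::complex) i) \<noteq> 0" by simp
    ultimately obtain z where z: "h z * (\<Prod>i<d. z i) \<noteq> 0"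
      using pf_nonzero_mult[OF pfh pfm, of x "\<lambda>_. 1"] by blast
    then have "z \<in> Om d" unfolding Om_def by auto
    then show False using z hOm by simp
  qed
  have "\<exists>x. Den x * (\<Prod>i<d. x i) \<noteq> 0"
  proof -
    obtain x0 where x0: "q x0 \<noteq> 0" using qnz by blast
    have "\<exists>x. (\<Prod>T\<in>Pw. q (flip T x)) \<noteq> 0"
    proof (rule pf_prod_nonzero[OF finPw])
      fix T assume "T \<in> Pw"
      show "(\<lambda>x. q (flip T x)) \<in> poly_fun d \<and> (\<exists>x. q (flip T x) \<noteq> 0)"
        using pf_flip[OF q] x0 flip_invol by metis
    qed
    then obtain x1 where "Den x1 \<noteq> 0" unfolding Den_def by blast
    moreover have "(\<Prod>i<d. (\<lambda>_. 1::complex) i) \<noteq> 0" by simp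
    ultimately show ?thesis using pf_nonzero_mult[OF pfDen pfm] by blast
  qed
  then obtain x where x: "Den x \<noteq> 0" "(\<Prod>i<d. x i) \<noteq> 0" by auto
  then have xOm: "x \<in> Om d" unfolding Om_def by auto
  have cPw: "of_nat (card Pw) \<noteq> (0::complex)" using finPw ePw by auto
  have "P2 (gens d x) \<noteq> 0" unfolding 2(4)[OF xOm, symmetric] aD_eq using x(1) cPw 2(3)[OF xOm] by simp
  then have Qnz: "Q (gens d x) \<noteq> 0" unfolding Q_def using 1(3)[OF xOm] by simp
  have "(P \<circ> gens d, Q \<circ> gens d) \<in> gen_field d" unfolding gen_field_def using pfP pfQ Qnz by blast
  moreover have "same_ratfun r (P \<circ> gens d, Q \<circ> gens d)"
    unfolding same_ratfun_def r using h0 unfolding h_def by simp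
  ultimately show ?thesis by blast
qed


theorem lemma3p16:
  fixes d :: nat
  assumes "d \<ge> 2"
  shows "(\<forall>r\<in>gen_field d. r \<in> rat_funs d \<and> W_invariant d r)
       \<and> (\<forall>r\<in>rat_funs d. W_invariant d r \<longrightarrow> (\<exists>s\<in>gen_field d. same_ratfun r s))"
proof -
  have d: "0 < d" using assms by simp
  show ?thesis using part1[OF d] part2[OF d] by blast
qed

end
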